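(* (i) For every number $N\ge 2$ of qubits, there is no unextendible product basis of $(\mathbb{C}^2)^{\otimes N}$ that is unextendible across every bipartition. (ii) For $N\ge 3$ qubits, there exists an unextendible entangled basis of $(\mathbb{C}^2)^{\otimes N}$, consisting of genuinely multipartite entangled states, whose unextendibility is conserved across every bipartition.
   Context: Consider $N$ qubits held by $N$ parties. A bipartition is a split of the parties into two nonempty groups, viewing the space as a bipartite space $\mathbb{C}^{2^{k}}\otimes\mathbb{C}^{2^{N-k}}$. An unextendible product basis (UPB) is a set of mutually orthogonal fully product pure states spanning a proper subspace whose orthogonal complement contains no fully product state; it is unextendible across every bipartition if, for every bipartition, the orthogonal complement contains no pure state that is a product state with respect to that bipartition. An unextendible entangled basis (UEB) is a set of mutually orthogonal pure entangled states spanning a proper subspace; its unextendibility is conserved across every bipartition if, for every bipartition, the orthogonal complement of its span contains no pure state that is entangled with respect to that bipartition (equivalently, every pure state in the complement is fully separable). A pure state is genuinely multipartite entangled if it is not a product state with respect to any bipartition. *)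

theory Defs
  imports Complex_Main
begin

text \<open>Computational basis states are indexed by subsets x of {0..<N}
 (the set of qubits in state 1). A vector of (C^2)^{\<otimes>N} is a function
 nat set \<Rightarrow> complex vanishing outside Pow {0..<N}. A pure state is a nonzero
 such vector (normalisation is irrelevant for all notions below).\<close>

definition qvec :: "nat \<Rightarrow> (nat set \<Rightarrow> complex) \<Rightarrow> bool" where
  "qvec N v \<longleftrightarrow> (\<forall>x. \<not> x \<subseteq> {0..<N} \<longrightarrow> v x = 0)"

definition qstate :: "nat \<Rightarrow> (nat set \<Rightarrow> complex) \<Rightarrow> bool" where
  "qstate N v \<longleftrightarrow> qvec N v \<and> v \<noteq> (\<lambda>_. 0)"

definition qinner :: "nat \<Rightarrow> (nat set \<Rightarrow> complex) \<Rightarrow> (nat set \<Rightarrow> complex) \<Rightarrow> complex" where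
  "qinner N u v = (\<Sum>x\<in>Pow {0..<N}. cnj (u x) * v x)"

definition orth_states :: "nat \<Rightarrow> (nat set \<Rightarrow> complex) set \<Rightarrow> bool" where
  "orth_states N B \<longleftrightarrow> (\<forall>v\<in>B. qstate N v) \<and> (\<forall>u\<in>B. \<forall>v\<in>B. u \<noteq> v \<longrightarrow> qinner N u v = 0)"

definition qspan :: "(nat set \<Rightarrow> complex) set \<Rightarrow> (nat set \<Rightarrow> complex) set" where
  "qspan B = {w. \<exists>F c. finite F \<and> F \<subseteq> B \<and> w = (\<lambda>x. \<Sum>b\<in>F. c b * b x)}"

definition spans_proper :: "nat \<Rightarrow> (nat set \<Rightarrow> complex) set \<Rightarrow> bool" where
  "spans_proper N B \<longleftrightarrow> (\<exists>w. qvec N w \<and> w \<notin> qspan B)"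

definition orth_compl :: "nat \<Rightarrow> (nat set \<Rightarrow> complex) set \<Rightarrow> (nat set \<Rightarrow> complex) set" where
  "orth_compl N B = {w. qvec N w \<and> (\<forall>b\<in>B. qinner N b w = 0)}"

definition fully_product :: "nat \<Rightarrow> (nat set \<Rightarrow> complex) \<Rightarrow> bool" where
  "fully_product N v \<longleftrightarrow> qstate N v \<and>
     (\<exists>f :: nat \<Rightarrow> bool \<Rightarrow> complex. \<forall>x. x \<subseteq> {0..<N} \<longrightarrow> v x = (\<Prod>i<N. f i (i \<in> x)))"

definition entangled :: "nat \<Rightarrow> (nat set \<Rightarrow> complex) \<Rightarrow> bool" where
  "entangled N v \<longleftrightarrow> qstate N v \<and> \<not> fully_product N v"

definition bipartition :: "nat \<Rightarrow> nat set \<Rightarrow> bool" where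
  "bipartition N S \<longleftrightarrow> S \<subseteq> {0..<N} \<and> S \<noteq> {} \<and> S \<noteq> {0..<N}"

definition product_across :: "nat \<Rightarrow> nat set \<Rightarrow> (nat set \<Rightarrow> complex) \<Rightarrow> bool" where
  "product_across N S v \<longleftrightarrow> qstate N v \<and>
     (\<exists>a b :: nat set \<Rightarrow> complex. \<forall>x. x \<subseteq> {0..<N} \<longrightarrow> v x = a (x \<inter> S) * b (x - S))"

definition entangled_across :: "nat \<Rightarrow> nat set \<Rightarrow> (nat set \<Rightarrow> complex) \<Rightarrow> bool" where
  "entangled_across N S v \<longleftrightarrow> qstate N v \<and> \<not> product_across N S v"

definition GME :: "nat \<Rightarrow> (nat set \<Rightarrow> complex) \<Rightarrow> bool" where
  "GME N v \<longleftrightarrow> qstate N v \<and> (\<forall>S. bipartition N S \<longrightarrow> \<not> product_across N S v)"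

definition UPB :: "nat \<Rightarrow> (nat set \<Rightarrow> complex) set \<Rightarrow> bool" where
  "UPB N B \<longleftrightarrow> orth_states N B \<and> (\<forall>v\<in>B. fully_product N v) \<and> spans_proper N B \<and>
     (\<forall>w\<in>orth_compl N B. \<not> fully_product N w)"

definition UPB_unext_all_bipartitions :: "nat \<Rightarrow> (nat set \<Rightarrow> complex) set \<Rightarrow> bool" where
  "UPB_unext_all_bipartitions N B \<longleftrightarrow>
     (\<forall>S. bipartition N S \<longrightarrow> (\<forall>w\<in>orth_compl N B. \<not> product_across N S w))"

definition UEB :: "nat \<Rightarrow> (nat set \<Rightarrow> complex) set \<Rightarrow> bool" where
  "UEB N B \<longleftrightarrow> orth_states N B \<and> (\<forall>v\<in>B. entangled N v) \<and> spans_proper N B \<and>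
     (\<forall>w\<in>orth_compl N B. \<not> entangled N w)"

definition UEB_conserved_all_bipartitions :: "nat \<Rightarrow> (nat set \<Rightarrow> complex) set \<Rightarrow> bool" where
  "UEB_conserved_all_bipartitions N B \<longleftrightarrow>
     (\<forall>S. bipartition N S \<longrightarrow> (\<forall>w\<in>orth_compl N B. \<not> entangled_across N S w))"

end

theory Submission
  imports Defs "HOL-Library.Function_Algebras"
begin

lemma sum_fun_apply: "(\<Sum>b\<in>F. f b) x = (\<Sum>b\<in>F. f b x)"
  by (induction F rule: infinite_finite_induct) auto

interpretation fv: vector_space "\<lambda>(c::complex) (f::nat set \<Rightarrow> complex). (\<lambda>x. c * f x)"
  by unfold_locales (auto simp: fun_eq_iff algebra_simps)

definition ip :: "nat set set \<Rightarrow> (nat set \<Rightarrow> complex) \<Rightarrow> (nat set \<Rightarrow> complex) \<Rightarrow> complex" where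
  "ip D u v = (\<Sum>x\<in>D. cnj (u x) * v x)"

lemma qinner_ip: "qinner N u v = ip (Pow {0..<N}) u v"
  by (simp add: qinner_def ip_def)

lemma ip_sum_right: "ip D u (\<lambda>x. \<Sum>b\<in>F. c b * b x) = (\<Sum>b\<in>F. c b * ip D u b)"
  unfolding ip_def by (simp add: sum_distrib_left sum_distrib_right mult_ac sum.swap[of _ D])

lemma ip_sum_left: "ip D (\<lambda>x. \<Sum>b\<in>F. c b * b x) v = (\<Sum>b\<in>F. cnj (c b) * ip D b v)"
  unfolding ip_def by (simp add: sum_distrib_left sum_distrib_right mult_ac sum.swap[of _ D])

lemma ip_sum_right': "ip D u (\<lambda>x. \<Sum>b\<in>F. c b * g b x) = (\<Sum>b\<in>F. c b * ip D u (g b))"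
  unfolding ip_def by (simp add: sum_distrib_left sum_distrib_right mult_ac sum.swap[of _ D])

lemma ip_sum_left': "ip D (\<lambda>x. \<Sum>b\<in>F. c b * g b x) v = (\<Sum>b\<in>F. cnj (c b) * ip D (g b) v)"
  unfolding ip_def by (simp add: sum_distrib_left sum_distrib_right mult_ac sum.swap[of _ D])

lemma ip_diff_right: "ip D u (\<lambda>x. f x - g x) = ip D u f - ip D u g"
  unfolding ip_def by (simp add: algebra_simps sum_subtractf)

lemma ip_diff_left: "ip D (\<lambda>x. f x - g x) v = ip D f v - ip D g v"
  unfolding ip_def by (simp add: algebra_simps sum_subtractf)

lemma ip_cong: "(\<And>x. x \<in> D \<Longrightarrow> u x = u' x) \<Longrightarrow> (\<And>x. x \<in> D \<Longrightarrow> v x = v' x) \<Longrightarrow> ip D u v = ip D u' v'"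
  unfolding ip_def by (auto intro: sum.cong)

lemma ip_self_zero: assumes "finite D" "ip D u u = 0" "x \<in> D" shows "u x = 0"
proof -
  have e: "\<And>x. cnj (u x) * u x = complex_of_real ((cmod (u x))^2)"
    using complex_norm_square by (metis mult.commute)
  have "ip D u u = of_real (\<Sum>x\<in>D. (cmod (u x))^2)"
    unfolding ip_def e of_real_sum by simp
  with assms have "(\<Sum>x\<in>D. (cmod (u x))^2) = 0" by (metis of_real_eq_0_iff)
  with assms have "(cmod (u x))^2 = 0" by (simp add: sum_nonneg_eq_0_iff)
  thus ?thesis by simp
qed

lemma B_finite:
  assumes "orth_states N B" shows "finite B"
proof -
  define T where "T = (\<lambda>y. (\<lambda>z. if z = y then 1 else 0 :: complex)) ` Pow {0..<N}"
  have fT: "finite T" unfolding T_def by simp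
  have sp: "B \<subseteq> fv.span T"
  proof
    fix v assume "v \<in> B"
    hence qv: "qvec N v" using assms by (auto simp: orth_states_def qstate_def)
    have "v = (\<Sum>y\<in>Pow {0..<N}. (\<lambda>x. v y * (if x = y then 1 else 0)))"
      using qv by (auto simp: fun_eq_iff sum_fun_apply qvec_def if_distrib cong: if_cong)
    also have "\<dots> \<in> fv.span T"
    proof (intro fv.span_sum)
      fix y assume "y \<in> Pow {0..<N}"
      hence "(\<lambda>z. if z = y then 1 else 0 :: complex) \<in> T" by (auto simp: T_def)
      from fv.span_scale[OF fv.span_base[OF this], of "v y"]
      show "(\<lambda>x. v y * (if x = y then 1 else 0)) \<in> fv.span T" by simp
    qed
    finally show "v \<in> fv.span T" .
  qed
  have ind: "fv.independent B"
    unfolding fv.independent_explicit_module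
  proof (intro allI impI)
    fix t u v assume t: "finite t" "t \<subseteq> B" and s: "(\<Sum>v\<in>t. (\<lambda>x. u v * v x)) = 0" and v: "v \<in> t"
    have h: "\<And>x. (\<Sum>w\<in>t. u w * w x) = 0" using fun_cong[OF s] by (simp add: sum_fun_apply)
    have "0 = ip (Pow {0..<N}) v (\<lambda>x. \<Sum>w\<in>t. u w * w x)"
      by (simp add: h ip_def)
    also have "\<dots> = (\<Sum>w\<in>t. u w * ip (Pow {0..<N}) v w)" by (rule ip_sum_right)
    also have "\<dots> = u v * ip (Pow {0..<N}) v v + (\<Sum>w\<in>t-{v}. u w * ip (Pow {0..<N}) v w)"
      by (rule sum.remove[OF t(1) v])
    also have "(\<Sum>w\<in>t-{v}. u w * ip (Pow {0..<N}) v w) = 0"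
    proof (intro sum.neutral ballI)
      fix w assume "w \<in> t - {v}"
      hence "v \<in> B" "w \<in> B" "w \<noteq> v" using t v by auto
      thus "u w * ip (Pow {0..<N}) v w = 0" using assms unfolding orth_states_def qinner_ip by auto
    qed
    finally have "u v * ip (Pow {0..<N}) v v = 0" by simp
    moreover have "ip (Pow {0..<N}) v v \<noteq> 0"
    proof
      assume z: "ip (Pow {0..<N}) v v = 0"
      have "qstate N v" using t v assms by (auto simp: orth_states_def)
      then obtain x where "v x \<noteq> 0" "qvec N v" by (auto simp: qstate_def fun_eq_iff)
      moreover hence "x \<in> Pow {0..<N}" by (auto simp: qvec_def)
      ultimately show False using ip_self_zero[OF _ z] by auto
    qed
    ultimately show "u v = 0" by simp
  qed
  show ?thesis using fv.independent_span_bound[OF fT ind sp] by simp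
qed

lemma ip_scale_left: "ip D (\<lambda>x. c * u x) v = cnj c * ip D u v"
  unfolding ip_def by (simp add: sum_distrib_left mult_ac)

lemma ip_scale_right: "ip D u (\<lambda>x. c * v x) = c * ip D u v"
  unfolding ip_def by (simp add: sum_distrib_left mult_ac)

lemma projection_exists:
  assumes os: "orth_states N B" and sp: "spans_proper N B"
  shows "\<exists>w\<in>orth_compl N B. qstate N w"
proof -
  have fin: "finite B" by (rule B_finite[OF os])
  obtain w where w: "qvec N w" "w \<notin> qspan B" using sp by (auto simp: spans_proper_def)
  define c where "c b = qinner N b w / qinner N b b" for b
  define w' where "w' = (\<lambda>x. w x - (\<Sum>b\<in>B. c b * b x))"
  have qvB: "\<And>b. b \<in> B \<Longrightarrow> qvec N b" using os by (auto simp: orth_states_def qstate_def)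
  have nzB: "\<And>b. b \<in> B \<Longrightarrow> qinner N b b \<noteq> 0"
  proof
    fix b assume b: "b \<in> B" and z: "qinner N b b = 0"
    have "qstate N b" using os b by (auto simp: orth_states_def)
    then obtain x where "b x \<noteq> 0" "qvec N b" by (auto simp: qstate_def fun_eq_iff)
    moreover hence "x \<in> Pow {0..<N}" by (auto simp: qvec_def)
    ultimately show False using ip_self_zero[of "Pow {0..<N}" b x] z by (auto simp: qinner_ip)
  qed
  have "\<forall>x. \<not> x \<subseteq> {0..<N} \<longrightarrow> (\<forall>b\<in>B. b x = 0)" using qvB by (auto simp: qvec_def)
  hence "qvec N w'" using w(1) unfolding w'_def qvec_def by (simp add: sum.neutral)
  moreover have "\<forall>u\<in>B. qinner N u w' = 0"
  proof
    fix u assume u: "u \<in> B"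
    have "qinner N u w' = qinner N u w - (\<Sum>b\<in>B. c b * qinner N u b)"
      unfolding w'_def qinner_ip ip_diff_right ip_sum_right ..
    also have "(\<Sum>b\<in>B. c b * qinner N u b) = c u * qinner N u u + (\<Sum>b\<in>B-{u}. c b * qinner N u b)"
      by (rule sum.remove[OF fin u])
    also have "(\<Sum>b\<in>B-{u}. c b * qinner N u b) = 0"
    proof (intro sum.neutral ballI)
      fix b assume "b \<in> B - {u}"
      thus "c b * qinner N u b = 0" using os u unfolding orth_states_def by auto
    qed
    finally show "qinner N u w' = 0" using nzB[OF u] by (simp add: c_def)
  qed
  moreover have "w' \<noteq> (\<lambda>_. 0)"
  proof
    assume "w' = (\<lambda>_. 0)"
    hence "w = (\<lambda>x. \<Sum>b\<in>B. c b * b x)" by (auto simp: w'_def fun_eq_iff dest: fun_cong)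
    hence "w \<in> qspan B" using fin unfolding qspan_def by blast
    thus False using w by simp
  qed
  ultimately show ?thesis by (auto simp: orth_compl_def qstate_def)
qed

lemma Pow_split:
  fixes N :: nat
  assumes "N \<ge> 1"
  shows "Pow {0..<N} = Pow {1..<N} \<union> insert 0 ` Pow {1..<N}"
proof -
  have "{0..<N} = insert 0 {1..<N}"
  proof (rule set_eqI)
    fix x show "x \<in> {0..<N} \<longleftrightarrow> x \<in> insert 0 {1..<N}" using assms by (cases x) auto
  qed
  thus ?thesis by (simp add: Pow_insert)
qed

lemma ip_split:
  fixes N :: nat
  assumes "N \<ge> 1"
  shows "ip (Pow {0..<N}) u v = ip (Pow {1..<N}) u v + ip (Pow {1..<N}) (\<lambda>y. u (insert 0 y)) (\<lambda>y. v (insert 0 y))"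
proof -
  have d: "Pow {1..<N} \<inter> insert 0 ` Pow {1..<N} = {}" by auto
  have i: "inj_on (insert 0) (Pow {1..<N})"
  proof (rule inj_onI)
    fix x y assume "x \<in> Pow {1..<N}" "y \<in> Pow {1..<N}" "insert 0 x = insert (0::nat) y"
    thus "x = y" by (metis Diff_insert_absorb PowD atLeastLessThan_iff not_one_le_zero subsetD)
  qed
  have r: "(\<Sum>x\<in>insert 0 ` Pow {1..<N}. cnj (u x) * v x) = (\<Sum>x\<in>Pow {1..<N}. cnj (u (insert 0 x)) * v (insert 0 x))"
    by (rule sum.reindex[OF i, unfolded comp_def])
  have "ip (Pow {0..<N}) u v = (\<Sum>x\<in>Pow {1..<N}. cnj (u x) * v x) + (\<Sum>x\<in>insert 0 ` Pow {1..<N}. cnj (u x) * v x)"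
    unfolding Pow_split[OF assms] ip_def by (rule sum.union_disjoint) (use d in auto)
  also have "\<dots> = ip (Pow {1..<N}) u v + ip (Pow {1..<N}) (\<lambda>y. u (insert 0 y)) (\<lambda>y. v (insert 0 y))"
    unfolding r ip_def ..
  finally show ?thesis .
qed

lemma fp_split:
  assumes "fully_product N u" "N \<ge> 1"
  shows "\<exists>a::bool\<Rightarrow>complex. \<exists>b. \<forall>y\<subseteq>{1..<N}. u y = a False * b y \<and> u (insert 0 y) = a True * b y"
proof -
  obtain f where f: "\<forall>x. x \<subseteq> {0..<N} \<longrightarrow> u x = (\<Prod>i<N. f i (i \<in> x))"
    using assms by (auto simp: fully_product_def)
  have L: "{..<N} = insert 0 {1..<N}"
  proof (rule set_eqI)
    fix x show "x \<in> {..<N} \<longleftrightarrow> x \<in> insert 0 {1..<N}" using assms by (cases x) auto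
  qed
  show ?thesis
  proof (intro exI allI impI conjI)
    fix y assume y: "y \<subseteq> {1..<N}"
    have y0: "0 \<notin> y" using y by auto
    have "y \<subseteq> {0..<N}" using y by auto
    hence "u y = (\<Prod>i<N. f i (i \<in> y))" using f by auto
    also have "\<dots> = f 0 False * (\<Prod>i\<in>{1..<N}. f i (i \<in> y))"
      unfolding L using y y0 by (subst prod.insert) auto
    finally show "u y = f 0 False * (\<Prod>i\<in>{1..<N}. f i (i \<in> y))" .
    have "insert 0 y \<subseteq> {0..<N}" using y assms by auto
    hence "u (insert 0 y) = (\<Prod>i<N. f i (i \<in> insert 0 y))" using f by blast
    also have "\<dots> = f 0 True * (\<Prod>i\<in>{1..<N}. f i (i \<in> insert 0 y))"
      unfolding L using y y0 by (subst prod.insert) auto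
    also have "(\<Prod>i\<in>{1..<N}. f i (i \<in> insert 0 y)) = (\<Prod>i\<in>{1..<N}. f i (i \<in> y))"
      by (intro prod.cong) auto
    finally show "u (insert 0 y) = f 0 True * (\<Prod>i\<in>{1..<N}. f i (i \<in> y))" .
  qed
qed

definition ip2 :: "(bool \<Rightarrow> complex) \<Rightarrow> (bool \<Rightarrow> complex) \<Rightarrow> complex" where
  "ip2 a b = cnj (a False) * b False + cnj (a True) * b True"

definition perp :: "(bool \<Rightarrow> complex) \<Rightarrow> (bool \<Rightarrow> complex)" where
  "perp a = (\<lambda>t. if t then cnj (a False) else - cnj (a True))"

lemma ip2_perp_self: "ip2 a (perp a) = 0"
  by (simp add: ip2_def perp_def)

lemma C2_lemma:
  assumes a: "a False \<noteq> 0 \<or> a True \<noteq> 0" and b: "b False \<noteq> 0 \<or> b True \<noteq> 0" and o: "ip2 b a = 0"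
  shows "\<exists>k. k \<noteq> 0 \<and> b False = k * perp a False \<and> b True = k * perp a True"
proof -
  have o': "b False * cnj (a False) + b True * cnj (a True) = 0"
    using arg_cong[OF o, of cnj] by (simp add: ip2_def)
  show ?thesis
  proof (cases "a False = 0")
    case True
    with a have aT: "a True \<noteq> 0" by simp
    with o' True have bT: "b True = 0" by simp
    show ?thesis
      by (rule exI[of _ "- b False / cnj (a True)"]) (use aT bT b True in \<open>auto simp: perp_def\<close>)
  next
    case False
    have "b False = - b True * cnj (a True) / cnj (a False)"
      using o' False by (simp add: field_simps add_eq_0_iff)
    thus ?thesis using False b
      by (intro exI[of _ "b True / cnj (a False)"]) (auto simp: perp_def field_simps)
  qed
qed

lemma mkW:
  fixes N :: nat
  assumes N: "N \<ge> 1" and a: "a False \<noteq> 0 \<or> a True \<noteq> 0" and y0: "y0 \<subseteq> {1..<N}" "y y0 \<noteq> 0"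
  defines "W \<equiv> (\<lambda>x. if x \<subseteq> {0..<N} then a (0 \<in> x) * y (x - {0}) else 0)"
  shows "qstate N W" "product_across N {0} W"
    and "\<And>(u::nat set \<Rightarrow> complex) \<alpha> \<beta>. (\<forall>z\<subseteq>{1..<N}. u z = \<alpha> False * \<beta> z \<and> u (insert 0 z) = \<alpha> True * \<beta> z) \<Longrightarrow>
            qinner N u W = ip2 \<alpha> a * ip (Pow {1..<N}) \<beta> y"
proof -
  have q: "qvec N W" by (simp add: W_def qvec_def)
  have 00: "0 \<notin> y0" using y0 by auto
  have s1: "y0 \<subseteq> {0..<N}" "insert 0 y0 \<subseteq> {0..<N}" using y0 N by auto
  have "W \<noteq> (\<lambda>_. 0)"
  proof (cases "a False = 0")
    case True
    hence "W (insert 0 y0) \<noteq> 0" using a y0 s1 00 by (simp add: W_def)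
    thus ?thesis by auto
  next
    case False
    hence "W y0 \<noteq> 0" using a y0 s1 00 by (simp add: W_def)
    thus ?thesis by auto
  qed
  thus qs: "qstate N W" using q by (simp add: qstate_def)
  show "product_across N {0} W" unfolding product_across_def
    by (rule conjI[OF qs], rule exI[of _ "\<lambda>s. a (0 \<in> s)"], rule exI[of _ y]) (simp add: W_def)
  fix u :: "nat set \<Rightarrow> complex" and \<alpha> :: "bool \<Rightarrow> complex" and \<beta> :: "nat set \<Rightarrow> complex"
  assume h: "\<forall>z\<subseteq>{1..<N}. u z = \<alpha> False * \<beta> z \<and> u (insert 0 z) = \<alpha> True * \<beta> z"
  have e1: "ip (Pow {1..<N}) u W = ip (Pow {1..<N}) (\<lambda>z. \<alpha> False * \<beta> z) (\<lambda>z. a False * y z)"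
  proof (rule ip_cong)
    fix z assume "z \<in> Pow {1..<N}"
    hence z: "z \<subseteq> {1..<N}" "z \<subseteq> {0..<N}" "0 \<notin> z" by auto
    thus "u z = \<alpha> False * \<beta> z" using h by auto
    show "W z = a False * y z" using z by (simp add: W_def Diff_insert_absorb)
  qed
  have e2: "ip (Pow {1..<N}) (\<lambda>z. u (insert 0 z)) (\<lambda>z. W (insert 0 z)) = ip (Pow {1..<N}) (\<lambda>z. \<alpha> True * \<beta> z) (\<lambda>z. a True * y z)"
  proof (rule ip_cong)
    fix z assume "z \<in> Pow {1..<N}"
    hence z: "z \<subseteq> {1..<N}" "insert 0 z \<subseteq> {0..<N}" "0 \<notin> z" using N by auto
    thus "u (insert 0 z) = \<alpha> True * \<beta> z" using h by auto
    show "W (insert 0 z) = a True * y z" using z by (simp add: W_def Diff_insert_absorb)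
  qed
  show "qinner N u W = ip2 \<alpha> a * ip (Pow {1..<N}) \<beta> y"
    unfolding qinner_ip ip_split[OF N] e1 e2 ip_scale_left ip_scale_right ip2_def
    by (simp add: algebra_simps)
qed

lemma normsq_nz:
  assumes "a False \<noteq> 0 \<or> a True \<noteq> 0"
  shows "cnj (a False) * a False + cnj (a True) * a True \<noteq> 0"
proof -
  have e: "\<And>z. cnj z * z = complex_of_real ((cmod z)^2)"
    using complex_norm_square by (metis mult.commute)
  have "(cmod (a False))^2 + (cmod (a True))^2 > 0" using assms
    by (metis add_nonneg_pos add_pos_nonneg norm_eq_zero zero_less_power2 zero_le_power2)
  hence "complex_of_real ((cmod (a False))^2 + (cmod (a True))^2) \<noteq> 0" by (metis of_real_eq_0_iff less_irrefl)
  thus ?thesis unfolding e by simp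
qed

lemma part1:
  fixes N :: nat
  assumes N: "N \<ge> 2" and U: "UPB N B"
  shows "\<exists>w\<in>orth_compl N B. product_across N {0} w"
proof -
  have N1: "N \<ge> 1" using N by simp
  define R where "R = Pow {1..<N}"
  have finR: "finite R" by (simp add: R_def)
  have os: "orth_states N B" and fpB: "\<forall>u\<in>B. fully_product N u" and sp: "spans_proper N B"
    using U by (auto simp: UPB_def)
  have fin: "finite B" by (rule B_finite[OF os])
  have "\<forall>u\<in>B. \<exists>a b. \<forall>y\<subseteq>{1..<N}. u y = a False * b y \<and> u (insert 0 y) = a True * b y"
    using fpB fp_split[OF _ N1] by blast
  then obtain al be where albe: "\<And>u. u\<in>B \<Longrightarrow> \<forall>y\<subseteq>{1..<N}. u y = al u False * be u y \<and> u (insert 0 y) = al u True * be u y"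
    by metis
  have qsB: "\<And>u. u \<in> B \<Longrightarrow> qstate N u" using os by (auto simp: orth_states_def)
  have nz: "(al u False \<noteq> 0 \<or> al u True \<noteq> 0) \<and> (\<exists>y0. y0 \<subseteq> {1..<N} \<and> be u y0 \<noteq> 0)" if u: "u \<in> B" for u
  proof -
    obtain x where x: "u x \<noteq> 0" "x \<subseteq> {0..<N}" using qsB[OF u]
      by (auto simp: qstate_def qvec_def fun_eq_iff)
    have y0: "x - {0} \<subseteq> {1..<N}" using x by auto
    show ?thesis
    proof (cases "0 \<in> x")
      case True
      hence "x = insert 0 (x - {0})" by auto
      hence "u x = al u True * be u (x - {0})" using albe[OF u] y0 by metis
      thus ?thesis using x y0 by auto
    next
      case False
      hence "x = x - {0}" by auto
      hence "u x = al u False * be u (x - {0})" using albe[OF u] y0 by metis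
      thus ?thesis using x y0 by auto
    qed
  qed
  have beself: "ip R (be u) (be u) \<noteq> 0" if u: "u \<in> B" for u
  proof
    assume "ip R (be u) (be u) = 0"
    moreover obtain y0 where "y0 \<subseteq> {1..<N}" "be u y0 \<noteq> 0" using nz[OF u] by blast
    ultimately show False using ip_self_zero[OF finR] by (auto simp: R_def)
  qed
  have qi: "qinner N u v = cnj (al u False) * ip R (be u) v + cnj (al u True) * ip R (be u) (\<lambda>y. v (insert 0 y))"
    if u: "u \<in> B" for u v
  proof -
    have e1: "ip R u v = ip R (\<lambda>z. al u False * be u z) v"
      by (rule ip_cong) (use albe[OF u] in \<open>auto simp: R_def\<close>)
    have e2: "ip R (\<lambda>z. u (insert 0 z)) (\<lambda>z. v (insert 0 z)) = ip R (\<lambda>z. al u True * be u z) (\<lambda>z. v (insert 0 z))"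
      by (rule ip_cong) (use albe[OF u] in \<open>auto simp: R_def\<close>)
    show ?thesis unfolding qinner_ip ip_split[OF N1] R_def[symmetric] e1 e2 ip_scale_left ..
  qed
  have qi2: "qinner N u u' = ip2 (al u) (al u') * ip R (be u) (be u')" if u: "u \<in> B" "u' \<in> B" for u u'
  proof -
    have e1: "ip R (be u) u' = ip R (be u) (\<lambda>z. al u' False * be u' z)"
      by (rule ip_cong) (use albe[OF u(2)] in \<open>auto simp: R_def\<close>)
    have e2: "ip R (be u) (\<lambda>z. u' (insert 0 z)) = ip R (be u) (\<lambda>z. al u' True * be u' z)"
      by (rule ip_cong) (use albe[OF u(2)] in \<open>auto simp: R_def\<close>)
    show ?thesis unfolding qi[OF u(1)] e1 e2 ip_scale_right ip2_def by (simp add: algebra_simps)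
  qed
  have K1: "ip R (be u) (be u') = 0" if "u \<in> B" "u' \<in> B" "u \<noteq> u'" "ip2 (al u) (al u') \<noteq> 0" for u u'
    using qi2[OF that(1,2)] os that unfolding orth_states_def by auto
  define T where "T v = {j\<in>B. ip2 (al j) (al v) = 0}" for v
  have finT: "finite (T v)" for v using fin by (simp add: T_def)
  have TB: "T v \<subseteq> B" for v by (auto simp: T_def)
  have K2': "\<exists>k. k \<noteq> 0 \<and> al j False = k * perp (al v) False \<and> al j True = k * perp (al v) True"
    if "v \<in> B" "j \<in> T v" for v j
    using C2_lemma[of "al v" "al j"] nz that by (auto simp: T_def)
  have K2: "ip2 c (al j) \<noteq> 0" if h: "v \<in> B" "j \<in> T v" "ip2 c (perp (al v)) \<noteq> 0" for v j c
  proof -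
    obtain k where k: "k \<noteq> 0" "al j False = k * perp (al v) False" "al j True = k * perp (al v) True"
      using K2'[OF h(1,2)] by blast
    have "ip2 c (al j) = k * ip2 c (perp (al v))" unfolding ip2_def k(2,3) by (simp add: algebra_simps)
    thus ?thesis using k(1) h(3) by simp
  qed
  define cf where "cf v j = ip R (be j) (be v) / ip R (be j) (be j)" for v j
  define res where "res v = (\<lambda>z. be v z - (\<Sum>j\<in>T v. cf v j * be j z))" for v
  have key: "\<exists>a y y0. (a False \<noteq> 0 \<or> a True \<noteq> 0) \<and> y0 \<subseteq> {1..<N} \<and> y y0 \<noteq> 0 \<and> (\<forall>u\<in>B. ip2 (al u) a * ip R (be u) y = 0)"
  proof (cases "\<exists>v\<in>B. \<exists>y0. y0 \<subseteq> {1..<N} \<and> res v y0 \<noteq> 0")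
    case True
    then obtain v y0 where v: "v\<in>B" "y0 \<subseteq> {1..<N}" "res v y0 \<noteq> 0" by blast
    have pa: "perp (al v) False \<noteq> 0 \<or> perp (al v) True \<noteq> 0" using nz[OF v(1)] by (auto simp: perp_def)
    have "\<forall>u\<in>B. ip2 (al u) (perp (al v)) * ip R (be u) (res v) = 0"
    proof
      fix u assume u: "u\<in>B"
      show "ip2 (al u) (perp (al v)) * ip R (be u) (res v) = 0"
      proof (cases "ip2 (al u) (perp (al v)) = 0")
        case True thus ?thesis by simp
      next
        case False
        have orthj: "ip R (be u) (be j) = 0" if "j \<in> T v" "j \<noteq> u" for j
          using K1[OF u _ _ K2[OF v(1) that(1) False]] that TB by auto
        have ex: "ip R (be u) (res v) = ip R (be u) (be v) - (\<Sum>j\<in>T v. cf v j * ip R (be u) (be j))"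
          unfolding res_def ip_diff_right ip_sum_right' ..
        have "ip R (be u) (res v) = 0"
        proof (cases "u \<in> T v")
          case True
          have "(\<Sum>j\<in>T v. cf v j * ip R (be u) (be j)) = cf v u * ip R (be u) (be u) + (\<Sum>j\<in>T v - {u}. cf v j * ip R (be u) (be j))"
            by (rule sum.remove[OF finT True])
          also have "(\<Sum>j\<in>T v - {u}. cf v j * ip R (be u) (be j)) = 0"
            by (rule sum.neutral) (use orthj in auto)
          finally show ?thesis using ex beself[OF u] by (simp add: cf_def)
        next
          case F2: False
          have "u \<noteq> v" using False ip2_perp_self by auto
          moreover have "ip2 (al u) (al v) \<noteq> 0" using F2 u by (auto simp: T_def)
          ultimately have "ip R (be u) (be v) = 0" using K1 u v(1) by blast
          moreover have "(\<Sum>j\<in>T v. cf v j * ip R (be u) (be j)) = 0"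
            by (rule sum.neutral) (use orthj F2 in auto)
          ultimately show ?thesis using ex by simp
        qed
        thus ?thesis by simp
      qed
    qed
    thus ?thesis using pa v by blast
  next
    case False
    hence r0: "\<And>v z. v\<in>B \<Longrightarrow> z \<subseteq> {1..<N} \<Longrightarrow> res v z = 0" by blast
    obtain w where w: "w \<in> orth_compl N B" "qstate N w" using projection_exists[OF os sp] by blast
    define P where "P \<beta> = ip R \<beta> w" for \<beta>
    define Q where "Q \<beta> = ip R \<beta> (\<lambda>y. w (insert 0 y))" for \<beta>
    have PQ: "cnj (al u False) * P (be u) + cnj (al u True) * Q (be u) = 0" if "u\<in>B" for u
      using qi[OF that, of w] w(1) that by (auto simp: orth_compl_def P_def Q_def)
    have bev: "P (be v) = (\<Sum>j\<in>T v. cnj (cf v j) * P (be j)) \<and> Q (be v) = (\<Sum>j\<in>T v. cnj (cf v j) * Q (be j))"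
      if v: "v\<in>B" for v
    proof -
      have "ip R (be v) g = ip R (\<lambda>z. \<Sum>j\<in>T v. cf v j * be j z) g" for g
        by (rule ip_cong) (use r0[OF v] in \<open>auto simp: R_def res_def\<close>)
      thus ?thesis unfolding P_def Q_def ip_sum_left' by simp
    qed
    have Tj: "- al v True * P (be j) + al v False * Q (be j) = 0" if h: "v\<in>B" "j\<in>T v" for v j
    proof -
      obtain k where k: "k \<noteq> 0" "al j False = k * perp (al v) False" "al j True = k * perp (al v) True"
        using K2'[OF h] by blast
      have "0 = cnj (al j False) * P (be j) + cnj (al j True) * Q (be j)" using PQ TB h by auto
      also have "\<dots> = cnj k * (- al v True * P (be j) + al v False * Q (be j))"
        unfolding k(2,3) perp_def by (simp add: algebra_simps)
      finally show ?thesis using k(1) by simp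
    qed
    have PQ0: "P (be v) = 0 \<and> Q (be v) = 0" if v: "v\<in>B" for v
    proof -
      define aF where "aF = al v False"
      define aT where "aT = al v True"
      have e1: "cnj aF * P (be v) + cnj aT * Q (be v) = 0" using PQ[OF v] by (simp add: aF_def aT_def)
      have "- aT * P (be v) + aF * Q (be v) = (\<Sum>j\<in>T v. cnj (cf v j) * (- aT * P (be j) + aF * Q (be j)))"
        unfolding bev[OF v, THEN conjunct1] bev[OF v, THEN conjunct2]
        by (simp add: sum_distrib_left sum.distrib algebra_simps sum_subtractf sum_negf)
      also have "\<dots> = 0" using Tj[OF v] by (simp add: aF_def aT_def)
      finally have e2: "- aT * P (be v) + aF * Q (be v) = 0" .
      have D: "cnj aF * aF + cnj aT * aT \<noteq> 0" using normsq_nz nz[OF v] by (simp add: aF_def aT_def)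
      have "(cnj aF * aF + cnj aT * aT) * P (be v) = aF * (cnj aF * P (be v) + cnj aT * Q (be v)) - cnj aT * (- aT * P (be v) + aF * Q (be v))"
        by (simp add: algebra_simps)
      hence p: "P (be v) = 0" using e1 e2 D by simp
      have "(cnj aF * aF + cnj aT * aT) * Q (be v) = aT * (cnj aF * P (be v) + cnj aT * Q (be v)) + cnj aF * (- aT * P (be v) + aF * Q (be v))"
        by (simp add: algebra_simps)
      hence "Q (be v) = 0" using e1 e2 D by simp
      with p show ?thesis by simp
    qed
    obtain x where x: "w x \<noteq> 0" "x \<subseteq> {0..<N}" using w(2)
      by (auto simp: qstate_def qvec_def fun_eq_iff)
    have y0: "x - {0} \<subseteq> {1..<N}" using x by auto
    show ?thesis
    proof (cases "0 \<in> x")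
      case True
      hence "insert 0 (x - {0}) = x" by auto
      hence "(\<lambda>z. w (insert 0 z)) (x - {0}) \<noteq> 0" using x by simp
      moreover have "\<forall>u\<in>B. ip2 (al u) (\<lambda>t. if t then 1 else 0) * ip R (be u) (\<lambda>z. w (insert 0 z)) = 0"
        using PQ0 by (auto simp: Q_def)
      ultimately show ?thesis using y0 by (intro exI[of _ "\<lambda>t. if t then 1 else 0"] exI[of _ "\<lambda>z. w (insert 0 z)"] exI[of _ "x - {0}"]) auto
    next
      case False
      hence "x - {0} = x" by auto
      moreover have "\<forall>u\<in>B. ip2 (al u) (\<lambda>t. if t then 0 else 1) * ip R (be u) w = 0"
        using PQ0 by (auto simp: P_def)
      ultimately show ?thesis using y0 x by (intro exI[of _ "\<lambda>t. if t then 0 else 1"] exI[of _ w] exI[of _ x]) auto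
    qed
  qed
  then obtain a y y0 where ay: "a False \<noteq> 0 \<or> a True \<noteq> 0" "y0 \<subseteq> {1..<N}" "y y0 \<noteq> 0"
    "\<forall>u\<in>B. ip2 (al u) a * ip R (be u) y = 0" by blast
  define W where "W = (\<lambda>x. if x \<subseteq> {0..<N} then a (0 \<in> x) * y (x - {0}) else 0)"
  note M = mkW[of N a y0 y, OF N1 ay(1,2,3), folded W_def]
  have "qinner N u W = 0" if u: "u \<in> B" for u
    using M(3)[of u "al u" "be u"] albe[OF u] ay(4) u by (simp add: R_def)
  hence "W \<in> orth_compl N B"
    using M(1) by (auto simp: orth_compl_def qstate_def)
  thus ?thesis using M(2) by blast
qed

lemma L_gme:
  fixes N :: nat and v :: "nat set \<Rightarrow> complex"
  assumes x: "x \<subseteq> {0..<N}" and v1: "v x \<noteq> 0" and v2: "v ({0..<N} - x) \<noteq> 0"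
    and z: "\<And>y. y \<subseteq> {0..<N} \<Longrightarrow> y \<noteq> x \<Longrightarrow> y \<noteq> {0..<N} - x \<Longrightarrow> y \<noteq> e \<Longrightarrow> v y = 0"
    and S: "bipartition N S"
  shows "\<not> product_across N S v"
proof
  assume "product_across N S v"
  then obtain a b where ab: "\<And>y. y \<subseteq> {0..<N} \<Longrightarrow> v y = a (y \<inter> S) * b (y - S)"
    by (auto simp: product_across_def)
  define c where "c = {0..<N} - x"
  have S1: "S \<subseteq> {0..<N}" "S \<noteq> {}" "S \<noteq> {0..<N}" using S by (auto simp: bipartition_def)
  obtain i where i: "i \<in> S" using S1 by auto
  obtain j where j: "j \<in> {0..<N}" "j \<notin> S" using S1(1,3) by blast
  define y1 where "y1 = (x \<inter> S) \<union> (c - S)"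
  define y2 where "y2 = (c \<inter> S) \<union> (x - S)"
  have sub: "y1 \<subseteq> {0..<N}" "y2 \<subseteq> {0..<N}" "c \<subseteq> {0..<N}" using x S1 by (auto simp: y1_def y2_def c_def)
  have s: "y1 \<inter> S = x \<inter> S" "y1 - S = c - S" "y2 \<inter> S = c \<inter> S" "y2 - S = x - S"
    by (auto simp: y1_def y2_def c_def)
  have "v y1 * v y2 = v x * v c"
    using ab[OF sub(1)] ab[OF sub(2)] ab[OF x] ab[OF sub(3)] s by simp
  hence nz: "v y1 \<noteq> 0" "v y2 \<noteq> 0" using v1 v2 by (auto simp: c_def)
  have m: "j \<in> y1 \<longleftrightarrow> j \<notin> x" "j \<in> c \<longleftrightarrow> j \<notin> x" "i \<in> y1 \<longleftrightarrow> i \<in> x" "i \<in> c \<longleftrightarrow> i \<notin> x"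
    "i \<in> y2 \<longleftrightarrow> i \<notin> x" "j \<in> y2 \<longleftrightarrow> j \<in> x"
    using i j S1(1) by (auto simp: y1_def y2_def c_def)
  have d: "y1 \<noteq> x" "y1 \<noteq> c" "y2 \<noteq> x" "y2 \<noteq> c" "y1 \<noteq> y2"
    using m by metis+
  have "y1 = e" using z[OF sub(1)] nz d by (auto simp: c_def)
  moreover have "y2 = e" using z[OF sub(2)] nz d by (auto simp: c_def)
  ultimately show False using d by simp
qed

lemma fp_prod0:
  fixes N :: nat
  assumes "fully_product N u" "N \<ge> 1"
  shows "product_across N {0} u"
proof -
  obtain a b where ab: "\<forall>y\<subseteq>{1..<N}. u y = a False * b y \<and> u (insert 0 y) = a True * b y"
    using fp_split[OF assms] by blast
  have "u x = a (0 \<in> x) * b (x - {0})" if x: "x \<subseteq> {0..<N}" for x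
  proof -
    have y: "x - {0} \<subseteq> {1..<N}" using x by auto
    show ?thesis
    proof (cases "0 \<in> x")
      case True
      hence "x = insert 0 (x - {0})" by auto
      hence "u x = u (insert 0 (x - {0}))" by simp
      also have "\<dots> = a True * b (x - {0})" using ab y by blast
      finally show ?thesis using True by simp
    next
      case False
      hence "u x = u (x - {0})" by simp
      also have "\<dots> = a False * b (x - {0})" using ab y by blast
      finally show ?thesis using False by simp
    qed
  qed
  note main = this
  show ?thesis unfolding product_across_def
  proof (intro conjI exI allI impI)
    show "qstate N u" using assms(1) by (simp add: fully_product_def)
    fix x assume "x \<subseteq> {0..<N}"
    thus "u x = (\<lambda>s. a (0 \<in> s)) (x \<inter> {0}) * b (x - {0})" using main by simp
  qed
qed

lemma GME_entangled:
  fixes N :: nat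
  assumes "GME N v" "N \<ge> 2"
  shows "entangled N v"
proof -
  have "1 \<in> {0..<N}" "1 \<notin> {0::nat}" using assms(2) by auto
  hence "{0} \<noteq> {0..<N}" by blast
  hence "bipartition N {0}" using assms(2) unfolding bipartition_def by simp
  hence "\<not> product_across N {0} v" using assms(1) unfolding GME_def by blast
  hence "\<not> fully_product N v" using fp_prod0[of N v] assms(2) by linarith
  thus ?thesis using assms(1) unfolding GME_def entangled_def by blast
qed

definition dl :: "nat set \<Rightarrow> nat set \<Rightarrow> complex" where
  "dl y = (\<lambda>z. if z = y then 1 else 0)"

definition cpl :: "nat \<Rightarrow> nat set \<Rightarrow> nat set" where
  "cpl N x = {0..<N} - x"

definition gp :: "nat \<Rightarrow> nat set \<Rightarrow> nat set \<Rightarrow> complex" where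
  "gp N x = (\<lambda>z. dl x z + dl (cpl N x) z)"

definition gm :: "nat \<Rightarrow> nat set \<Rightarrow> nat set \<Rightarrow> complex" where
  "gm N x = (\<lambda>z. dl x z - dl (cpl N x) z)"

definition tv :: "nat \<Rightarrow> complex \<Rightarrow> complex \<Rightarrow> complex \<Rightarrow> nat set \<Rightarrow> complex" where
  "tv N p q r = (\<lambda>z. p * dl {0..<N} z + q * dl {1} z + r * dl (cpl N {1}) z)"

definition Xs :: "nat \<Rightarrow> nat set set" where
  "Xs N = {x. x \<subseteq> {1..<N} \<and> x \<noteq> {} \<and> x \<noteq> {1}}"

definition Bs :: "nat \<Rightarrow> (nat set \<Rightarrow> complex) set" where
  "Bs N = gp N ` Xs N \<union> gm N ` Xs N \<union> {tv N 1 2 2, tv N 2 1 (-2), tv N 2 (-2) 1}"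

lemma qinner_eval:
  assumes "finite T" "T \<subseteq> Pow {0..<N}" "\<And>z. z \<notin> T \<Longrightarrow> u z = 0"
  shows "qinner N u v = (\<Sum>z\<in>T. cnj (u z) * v z)"
  unfolding qinner_def using assms by (intro sum.mono_neutral_right) auto

lemma cpl_inj: "x \<subseteq> {0..<N} \<Longrightarrow> y \<subseteq> {0..<N} \<Longrightarrow> cpl N x = cpl N y \<longleftrightarrow> x = y"
  unfolding cpl_def by auto

lemma cpl_cpl: "x \<subseteq> {0..<N} \<Longrightarrow> cpl N (cpl N x) = x"
  unfolding cpl_def by auto

lemma ev_gp:
  assumes "x \<subseteq> {0..<N}" "x \<noteq> cpl N x"
  shows "qinner N (gp N x) v = v x + v (cpl N x)"
proof -
  have "qinner N (gp N x) v = (\<Sum>z\<in>{x, cpl N x}. cnj (gp N x z) * v z)"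
    using assms by (intro qinner_eval) (auto simp: gp_def dl_def cpl_def)
  also have "\<dots> = v x + v (cpl N x)" using assms by (simp add: gp_def dl_def)
  finally show ?thesis .
qed

lemma ev_gm:
  assumes "x \<subseteq> {0..<N}" "x \<noteq> cpl N x"
  shows "qinner N (gm N x) v = v x - v (cpl N x)"
proof -
  have "qinner N (gm N x) v = (\<Sum>z\<in>{x, cpl N x}. cnj (gm N x z) * v z)"
    using assms by (intro qinner_eval) (auto simp: gm_def dl_def cpl_def)
  also have "\<dots> = v x - v (cpl N x)" using assms by (simp add: gm_def dl_def)
  finally show ?thesis .
qed

lemma tri_facts:
  assumes "N \<ge> 2"
  shows "{0..<N} \<noteq> {1}" "{0..<N} \<noteq> cpl N {1}" "{1} \<noteq> cpl N {1}" "{1::nat} \<subseteq> {0..<N}"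
    "cpl N {1} \<subseteq> {0..<N}"
proof -
  have a: "1 \<in> {0..<N}" "0 \<in> {0..<N}" using assms by auto
  have b: "0 \<notin> {1::nat}" "1 \<notin> cpl N {1}" "0 \<in> cpl N {1}" using a by (auto simp: cpl_def)
  show "{0..<N} \<noteq> {1}" using a b by blast
  show "{0..<N} \<noteq> cpl N {1}" using a b by blast
  show "{1} \<noteq> cpl N {1}" using a b by blast
  show "{1::nat} \<subseteq> {0..<N}" using a by blast
  show "cpl N {1} \<subseteq> {0..<N}" by (auto simp: cpl_def)
qed

lemma ev_tv:
  assumes "N \<ge> 2"
  shows "qinner N (tv N p q r) v = cnj p * v {0..<N} + cnj q * v {1} + cnj r * v (cpl N {1})"
proof -
  note f = tri_facts[OF assms]
  have "qinner N (tv N p q r) v = (\<Sum>z\<in>{{0..<N}, {1}, cpl N {1}}. cnj (tv N p q r z) * v z)"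
    using f by (intro qinner_eval) (auto simp: tv_def dl_def)
  also have "\<dots> = cnj p * v {0..<N} + cnj q * v {1} + cnj r * v (cpl N {1})"
    using f f(1,2,3)[symmetric] by (simp add: tv_def dl_def)
  finally show ?thesis .
qed

lemma Xs_facts:
  fixes N :: nat
  assumes x: "x \<in> Xs N" and N: "N \<ge> 2"
  shows "x \<subseteq> {0..<N}" "0 \<notin> x" "0 \<in> cpl N x" "x \<noteq> {0..<N}" "x \<noteq> {1}" "x \<noteq> cpl N {1}"
    "cpl N x \<noteq> {0..<N}" "cpl N x \<noteq> {1}" "cpl N x \<noteq> cpl N {1}" "x \<noteq> cpl N x" "x \<noteq> {}"
    "cpl N x \<subseteq> {0..<N}"
proof -
  have x1: "x \<subseteq> {1..<N}" "x \<noteq> {}" "x \<noteq> {1}" using x by (auto simp: Xs_def)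
  show xs: "x \<subseteq> {0..<N}" using x1 by auto
  show x0: "0 \<notin> x" using x1 by auto
  have N0: "0 \<in> {0..<N}" using N by auto
  show c0: "0 \<in> cpl N x" using x0 N0 by (simp add: cpl_def)
  show "x \<noteq> {0..<N}" using x0 N0 by blast
  show "x \<noteq> {1}" by (rule x1(3))
  have "0 \<in> cpl N {1}" using N0 by (simp add: cpl_def)
  thus "x \<noteq> cpl N {1}" using x0 by blast
  have "{0..<N} = cpl N {}" by (simp add: cpl_def)
  thus "cpl N x \<noteq> {0..<N}" using cpl_inj[OF xs, of "{}"] x1(2) by simp
  show "cpl N x \<noteq> {1}" using c0 by (metis singletonD zero_neq_one)
  show "cpl N x \<noteq> cpl N {1}" using cpl_inj[OF xs, of "{1}"] x1(3) N by simp
  show "x \<noteq> cpl N x" using x0 c0 by blast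
  show "x \<noteq> {}" by (rule x1(2))
  show "cpl N x \<subseteq> {0..<N}" by (auto simp: cpl_def)
qed

lemma Xs_pair:
  fixes N :: nat
  assumes x: "x \<in> Xs N" and y: "y \<in> Xs N" and N: "N \<ge> 2" and ne: "x \<noteq> y"
  shows "x \<noteq> cpl N y" "cpl N x \<noteq> y" "cpl N x \<noteq> cpl N y"
proof -
  note fx = Xs_facts[OF x N] and fy = Xs_facts[OF y N]
  show "x \<noteq> cpl N y" using fx(2) fy(3) by blast
  show "cpl N x \<noteq> y" using fx(3) fy(2) by blast
  show "cpl N x \<noteq> cpl N y" using cpl_inj[OF fx(1) fy(1)] ne by simp
qed

lemma part2:
  fixes N :: nat
  assumes N3: "N \<ge> 3"
  shows "UEB N (Bs N) \<and> (\<forall>v\<in>Bs N. GME N v) \<and> UEB_conserved_all_bipartitions N (Bs N)"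
proof -
  have N: "N \<ge> 2" using N3 by simp
  note tf = tri_facts[OF N]
  have F0: "0 \<in> {0..<N}" using N by simp
  have c10: "0 \<in> cpl N {1}" using F0 by (simp add: cpl_def)
  have tfs: "{1} \<noteq> {0..<N}" "cpl N {1} \<noteq> {0..<N}" "cpl N {1} \<noteq> {1}" using tf(1,2,3) by auto
  have Bcases: "P v" if v: "v \<in> Bs N"
    and h1: "\<And>x. x \<in> Xs N \<Longrightarrow> P (gp N x)" and h2: "\<And>x. x \<in> Xs N \<Longrightarrow> P (gm N x)"
    and h3: "P (tv N 1 2 2)" and h4: "P (tv N 2 1 (-2))" and h5: "P (tv N 2 (-2) 1)" for P v
    using v h1 h2 h3 h4 h5 unfolding Bs_def by blast
  have gp_out: "gp N x z = 0" "gm N x z = 0" if "z \<noteq> x" "z \<noteq> cpl N x" for x z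
    using that by (auto simp: gp_def gm_def dl_def)
  have tv_out: "tv N p q r z = 0" if "z \<noteq> {0..<N}" "z \<noteq> {1}" "z \<noteq> cpl N {1}" for p q r z
    using that by (auto simp: tv_def dl_def)
  have gp_val: "gp N x x = 1" "gp N x (cpl N x) = 1" "gm N x x = 1" "gm N x (cpl N x) = -1"
    if "x \<in> Xs N" for x
    using Xs_facts(10)[OF that N] by (auto simp: gp_def gm_def dl_def)
  have tv_val: "tv N p q r {0..<N} = p" "tv N p q r {1} = q" "tv N p q r (cpl N {1}) = r" for p q r
    using tf(1,2,3) tfs by (auto simp: tv_def dl_def)
  have qv: "qvec N v" if "v \<in> Bs N" for v
  proof (rule Bcases[OF that])
    fix x assume x: "x \<in> Xs N"
    note fx = Xs_facts[OF x N]
    show "qvec N (gp N x)" unfolding qvec_def using fx(1,12) by (auto intro!: gp_out)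
    show "qvec N (gm N x)" unfolding qvec_def using fx(1,12) by (auto intro!: gp_out)
  next
    have "qvec N (tv N p q r)" for p q r unfolding qvec_def using tf(4,5) by (auto intro!: tv_out)
    thus "qvec N (tv N 1 2 2)" "qvec N (tv N 2 1 (-2))" "qvec N (tv N 2 (-2) 1)" by auto
  qed
  have gme: "GME N v" if v: "v \<in> Bs N" for v
  proof -
    have nz: "\<exists>x. x \<subseteq> {0..<N} \<and> v x \<noteq> 0 \<and> v (cpl N x) \<noteq> 0 \<and> (\<exists>e. \<forall>y. y \<noteq> x \<longrightarrow> y \<noteq> cpl N x \<longrightarrow> y \<noteq> e \<longrightarrow> v y = 0)"
    proof (rule Bcases[OF v])
      fix x assume x: "x \<in> Xs N"
      show "\<exists>x'. x' \<subseteq> {0..<N} \<and> gp N x x' \<noteq> 0 \<and> gp N x (cpl N x') \<noteq> 0 \<and> (\<exists>e. \<forall>y. y \<noteq> x' \<longrightarrow> y \<noteq> cpl N x' \<longrightarrow> y \<noteq> e \<longrightarrow> gp N x y = 0)"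
        using gp_val[OF x] Xs_facts(1)[OF x N] gp_out by (intro exI[of _ x]) auto
      show "\<exists>x'. x' \<subseteq> {0..<N} \<and> gm N x x' \<noteq> 0 \<and> gm N x (cpl N x') \<noteq> 0 \<and> (\<exists>e. \<forall>y. y \<noteq> x' \<longrightarrow> y \<noteq> cpl N x' \<longrightarrow> y \<noteq> e \<longrightarrow> gm N x y = 0)"
        using gp_val[OF x] Xs_facts(1)[OF x N] gp_out by (intro exI[of _ x]) auto
    next
      have g: "\<exists>x'. x' \<subseteq> {0..<N} \<and> tv N p q r x' \<noteq> 0 \<and> tv N p q r (cpl N x') \<noteq> 0 \<and> (\<exists>e. \<forall>y. y \<noteq> x' \<longrightarrow> y \<noteq> cpl N x' \<longrightarrow> y \<noteq> e \<longrightarrow> tv N p q r y = 0)"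
        if "q \<noteq> 0" "r \<noteq> 0" for p q r
      proof (rule exI[of _ "{1}"], intro conjI)
        show "{1} \<subseteq> {0..<N}" by (rule tf(4))
        show "tv N p q r {1} \<noteq> 0" "tv N p q r (cpl N {1}) \<noteq> 0" using that tv_val by simp_all
        have "\<forall>y. y \<noteq> {1} \<longrightarrow> y \<noteq> cpl N {1} \<longrightarrow> y \<noteq> {0..<N} \<longrightarrow> tv N p q r y = 0"
          using tv_out by blast
        thus "\<exists>e. \<forall>y. y \<noteq> {1} \<longrightarrow> y \<noteq> cpl N {1} \<longrightarrow> y \<noteq> e \<longrightarrow> tv N p q r y = 0" by blast
      qed
      show "\<exists>x'. x' \<subseteq> {0..<N} \<and> tv N 1 2 2 x' \<noteq> 0 \<and> tv N 1 2 2 (cpl N x') \<noteq> 0 \<and> (\<exists>e. \<forall>y. y \<noteq> x' \<longrightarrow> y \<noteq> cpl N x' \<longrightarrow> y \<noteq> e \<longrightarrow> tv N 1 2 2 y = 0)"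
        by (rule g) auto
      show "\<exists>x'. x' \<subseteq> {0..<N} \<and> tv N 2 1 (-2) x' \<noteq> 0 \<and> tv N 2 1 (-2) (cpl N x') \<noteq> 0 \<and> (\<exists>e. \<forall>y. y \<noteq> x' \<longrightarrow> y \<noteq> cpl N x' \<longrightarrow> y \<noteq> e \<longrightarrow> tv N 2 1 (-2) y = 0)"
        by (rule g) auto
      show "\<exists>x'. x' \<subseteq> {0..<N} \<and> tv N 2 (-2) 1 x' \<noteq> 0 \<and> tv N 2 (-2) 1 (cpl N x') \<noteq> 0 \<and> (\<exists>e. \<forall>y. y \<noteq> x' \<longrightarrow> y \<noteq> cpl N x' \<longrightarrow> y \<noteq> e \<longrightarrow> tv N 2 (-2) 1 y = 0)"
        by (rule g) auto
    qed
    then obtain x e where x: "x \<subseteq> {0..<N}" "v x \<noteq> 0" "v (cpl N x) \<noteq> 0"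
      "\<And>y. y \<noteq> x \<Longrightarrow> y \<noteq> cpl N x \<Longrightarrow> y \<noteq> e \<Longrightarrow> v y = 0" by blast
    have qs: "qstate N v" using qv[OF v] x(2) by (auto simp: qstate_def)
    have "\<not> product_across N S v" if "bipartition N S" for S
      using L_gme[of x N v e S] x that by (auto simp: cpl_def)
    thus ?thesis using qs by (simp add: GME_def)
  qed
  have evp: "qinner N (gp N x) w = w x + w (cpl N x)" "qinner N (gm N x) w = w x - w (cpl N x)"
    if "x \<in> Xs N" for x w
    using ev_gp[OF Xs_facts(1,10)[OF that N]] ev_gm[OF Xs_facts(1,10)[OF that N]] by auto
  have evt: "qinner N (tv N p q r) w = cnj p * w {0..<N} + cnj q * w {1} + cnj r * w (cpl N {1})" for p q r w
    by (rule ev_tv[OF N])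
  have vx: "v \<noteq> gp N x \<longrightarrow> v \<noteq> gm N x \<longrightarrow> v x = 0 \<and> v (cpl N x) = 0"
    if v: "v \<in> Bs N" and x: "x \<in> Xs N" for v x
  proof (rule Bcases[OF v])
    note fx = Xs_facts[OF x N]
    fix y assume y: "y \<in> Xs N"
    show "gp N y \<noteq> gp N x \<longrightarrow> gp N y \<noteq> gm N x \<longrightarrow> gp N y x = 0 \<and> gp N y (cpl N x) = 0"
    proof (intro impI)
      assume "gp N y \<noteq> gp N x"
      hence "x \<noteq> y" by auto
      note pr = Xs_pair[OF x y N this]
      show "gp N y x = 0 \<and> gp N y (cpl N x) = 0" using pr \<open>x \<noteq> y\<close> by (auto intro!: gp_out)
    qed
    show "gm N y \<noteq> gp N x \<longrightarrow> gm N y \<noteq> gm N x \<longrightarrow> gm N y x = 0 \<and> gm N y (cpl N x) = 0"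
    proof (intro impI)
      assume "gm N y \<noteq> gm N x"
      hence "x \<noteq> y" by auto
      note pr = Xs_pair[OF x y N this]
      show "gm N y x = 0 \<and> gm N y (cpl N x) = 0" using pr \<open>x \<noteq> y\<close> by (auto intro!: gp_out)
    qed
  next
    note fx = Xs_facts[OF x N]
    have "tv N p q r x = 0 \<and> tv N p q r (cpl N x) = 0" for p q r
      using fx by (auto intro!: tv_out)
    thus "tv N 1 2 2 \<noteq> gp N x \<longrightarrow> tv N 1 2 2 \<noteq> gm N x \<longrightarrow> tv N 1 2 2 x = 0 \<and> tv N 1 2 2 (cpl N x) = 0"
      "tv N 2 1 (-2) \<noteq> gp N x \<longrightarrow> tv N 2 1 (-2) \<noteq> gm N x \<longrightarrow> tv N 2 1 (-2) x = 0 \<and> tv N 2 1 (-2) (cpl N x) = 0"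
      "tv N 2 (-2) 1 \<noteq> gp N x \<longrightarrow> tv N 2 (-2) 1 \<noteq> gm N x \<longrightarrow> tv N 2 (-2) 1 x = 0 \<and> tv N 2 (-2) 1 (cpl N x) = 0"
      by auto
  qed
  have vt: "v {0..<N} = 0 \<and> v {1} = 0 \<and> v (cpl N {1}) = 0" if "v = gp N y \<or> v = gm N y" "y \<in> Xs N" for v y
  proof -
    note fy = Xs_facts[OF that(2) N]
    have z: "v z = 0" if "z \<noteq> y" "z \<noteq> cpl N y" for z
      using that \<open>v = gp N y \<or> v = gm N y\<close> gp_out[of z y] by blast
    show ?thesis using z fy(4-9) by metis
  qed
  have t: "tv N a b c {0..<N} = a \<and> tv N a b c {1} = b \<and> tv N a b c (cpl N {1}) = c" for a b c
    using tv_val by simp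
  have tt: "qinner N (tv N p q r) (tv N p' q' r') = cnj p * p' + cnj q * q' + cnj r * r'" for p q r p' q' r'
    using evt t by simp
  have tne: "tv N 1 2 2 \<noteq> tv N 2 1 (-2)" "tv N 1 2 2 \<noteq> tv N 2 (-2) 1" "tv N 2 1 (-2) \<noteq> tv N 2 (-2) 1"
  proof -
    have "tv N 1 2 2 {0..<N} \<noteq> tv N 2 1 (-2) {0..<N}" "tv N 1 2 2 {0..<N} \<noteq> tv N 2 (-2) 1 {0..<N}"
      "tv N 2 1 (-2) {1} \<noteq> tv N 2 (-2) 1 {1}" using t by simp_all
    thus "tv N 1 2 2 \<noteq> tv N 2 1 (-2)" "tv N 1 2 2 \<noteq> tv N 2 (-2) 1" "tv N 2 1 (-2) \<noteq> tv N 2 (-2) 1" by metis+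
  qed
  define T3 where "T3 = {tv N 1 2 2, tv N 2 1 (-2), tv N 2 (-2) 1}"
  have BsD: "(\<exists>x\<in>Xs N. v = gp N x \<or> v = gm N x) \<or> v \<in> T3" if "v \<in> Bs N" for v
    using that unfolding Bs_def T3_def by blast
  have T3orth: "qinner N u u' = 0" if "u \<in> T3" "u' \<in> T3" "u \<noteq> u'" for u u'
    using that tne unfolding T3_def by (auto simp: tt)
  have orth: "qinner N u u' = 0" if u: "u \<in> Bs N" and u': "u' \<in> Bs N" and ne: "u \<noteq> u'" for u u'
  proof -
    have pairs: "qinner N u u' = 0" if x: "x \<in> Xs N" and uu: "u = gp N x \<or> u = gm N x" for x
    proof (cases "u' = gp N x \<or> u' = gm N x")
      case True
      hence "(u = gp N x \<and> u' = gm N x) \<or> (u = gm N x \<and> u' = gp N x)" using uu ne by blast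
      thus ?thesis using evp[OF x] gp_val[OF x] by auto
    next
      case False
      hence "u' x = 0" "u' (cpl N x) = 0" using vx[OF u' x] by auto
      thus ?thesis using evp[OF x] uu by auto
    qed
    show ?thesis
    proof (cases "\<exists>x\<in>Xs N. u = gp N x \<or> u = gm N x")
      case True thus ?thesis using pairs by blast
    next
      case False
      hence uT: "u \<in> T3" using BsD[OF u] by blast
      then obtain p q r where pqr: "u = tv N p q r" unfolding T3_def by blast
      show ?thesis
      proof (cases "\<exists>y\<in>Xs N. u' = gp N y \<or> u' = gm N y")
        case True
        then obtain y where "y \<in> Xs N" "u' = gp N y \<or> u' = gm N y" by blast
        thus ?thesis using vt[of u' y] pqr evt by simp
      next
        case False
        hence "u' \<in> T3" using BsD[OF u'] by blast
        thus ?thesis using T3orth uT ne by blast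
      qed
    qed
  qed
  have os: "orth_states N (Bs N)"
    using gme orth unfolding orth_states_def GME_def by blast
  have v0: "v {} = 0" if v: "v \<in> Bs N" for v
  proof (cases "\<exists>x\<in>Xs N. v = gp N x \<or> v = gm N x")
    case True
    then obtain x where x: "x \<in> Xs N" "v = gp N x \<or> v = gm N x" by blast
    note fx = Xs_facts[OF x(1) N]
    have "{} \<noteq> x" "{} \<noteq> cpl N x" using fx(11,3) by auto
    thus ?thesis using x(2) gp_out by blast
  next
    case False
    hence "v \<in> T3" using BsD[OF v] by blast
    then obtain p q r where "v = tv N p q r" unfolding T3_def by blast
    moreover have "{} \<noteq> {0..<N}" "{} \<noteq> {1::nat}" "{} \<noteq> cpl N {1}" using F0 c10 by auto
    ultimately show ?thesis using tv_out by blast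
  qed
  have spp: "spans_proper N (Bs N)"
  proof -
    have q: "qvec N (dl {})" by (auto simp: qvec_def dl_def)
    have "dl {} \<notin> qspan (Bs N)"
    proof
      assume "dl {} \<in> qspan (Bs N)"
      then obtain F c where Fc: "F \<subseteq> Bs N" "dl {} = (\<lambda>x. \<Sum>b\<in>F. c b * b x)" by (auto simp: qspan_def)
      have "dl {} {} = (\<Sum>b\<in>F. c b * b {})" using Fc(2) by metis
      also have "\<dots> = 0" using Fc(1) v0 by (auto intro!: sum.neutral)
      finally show False by (simp add: dl_def)
    qed
    thus ?thesis using q unfolding spans_proper_def by blast
  qed
  have comp: "w z = 0" if w: "w \<in> orth_compl N (Bs N)" and z: "z \<noteq> {}" for w z
  proof -
    have wq: "qvec N w" and wo: "\<And>b. b \<in> Bs N \<Longrightarrow> qinner N b w = 0" using w by (auto simp: orth_compl_def)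
    have inB: "tv N 1 2 2 \<in> Bs N" "tv N 2 1 (-2) \<in> Bs N" "tv N 2 (-2) 1 \<in> Bs N" by (auto simp: Bs_def)
    have e1: "w {0..<N} + 2 * w {1} + 2 * w (cpl N {1}) = 0" using wo[OF inB(1)] evt by simp
    have e2: "2 * w {0..<N} + w {1} - 2 * w (cpl N {1}) = 0" using wo[OF inB(2)] evt by simp
    have e3: "2 * w {0..<N} - 2 * w {1} + w (cpl N {1}) = 0" using wo[OF inB(3)] evt by simp
    have "9 * w {0..<N} = (w {0..<N} + 2 * w {1} + 2 * w (cpl N {1})) + 2 * (2 * w {0..<N} + w {1} - 2 * w (cpl N {1})) + 2 * (2 * w {0..<N} - 2 * w {1} + w (cpl N {1}))"
      by (simp add: algebra_simps)
    hence wF: "w {0..<N} = 0" by (simp only: e1 e2 e3) simp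
    have "9 * w {1} = 2 * (w {0..<N} + 2 * w {1} + 2 * w (cpl N {1})) + (2 * w {0..<N} + w {1} - 2 * w (cpl N {1})) - 2 * (2 * w {0..<N} - 2 * w {1} + w (cpl N {1}))"
      by (simp add: algebra_simps)
    hence w1: "w {1} = 0" by (simp only: e1 e2 e3) simp
    have "9 * w (cpl N {1}) = 2 * (w {0..<N} + 2 * w {1} + 2 * w (cpl N {1})) - 2 * (2 * w {0..<N} + w {1} - 2 * w (cpl N {1})) + (2 * w {0..<N} - 2 * w {1} + w (cpl N {1}))"
      by (simp add: algebra_simps)
    hence wc: "w (cpl N {1}) = 0" by (simp only: e1 e2 e3) simp
    have pairz: "w x = 0 \<and> w (cpl N x) = 0" if x: "x \<in> Xs N" for x
    proof -
      have "gp N x \<in> Bs N" "gm N x \<in> Bs N" using x by (auto simp: Bs_def)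
      hence "qinner N (gp N x) w = 0" "qinner N (gm N x) w = 0" using wo by auto
      hence "w x + w (cpl N x) = 0" "w x - w (cpl N x) = 0" unfolding evp[OF x] .
      hence s: "w x + w (cpl N x) = 0" "w x - w (cpl N x) = 0" .
      have "2 * w x = (w x + w (cpl N x)) + (w x - w (cpl N x))" "2 * w (cpl N x) = (w x + w (cpl N x)) - (w x - w (cpl N x))"
        by (simp_all add: algebra_simps)
      hence "2 * w x = 0" "2 * w (cpl N x) = 0" unfolding s by simp_all
      thus ?thesis by simp
    qed
    show ?thesis
    proof (cases "z \<subseteq> {0..<N}")
      case False thus ?thesis using wq by (simp add: qvec_def)
    next
      case zs: True
      show ?thesis
      proof (cases "z = {0..<N} \<or> z = {1} \<or> z = cpl N {1}")
        case True thus ?thesis using wF w1 wc by blast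
      next
        case False
        hence zn: "z \<noteq> {0..<N}" "z \<noteq> {1}" "z \<noteq> cpl N {1}" by auto
        show ?thesis
        proof (cases "0 \<in> z")
          case False
          have "z \<subseteq> {1..<N}"
          proof
            fix i assume "i \<in> z"
            hence "i \<noteq> 0" "i < N" using False zs by (metis, auto)
            thus "i \<in> {1..<N}" by simp
          qed
          hence "z \<in> Xs N" using z zn by (simp add: Xs_def)
          thus ?thesis using pairz by blast
        next
          case True
          define x where "x = cpl N z"
          have cx: "cpl N x = z" using cpl_cpl[OF zs] by (simp add: x_def)
          have "x \<subseteq> {1..<N}"
          proof
            fix i assume "i \<in> x"
            hence "i \<notin> z" "i < N" using True by (auto simp: x_def cpl_def)
            hence "i \<noteq> 0" "i < N" using True by metis+
            thus "i \<in> {1..<N}" by simp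
          qed
          moreover have "x \<noteq> {}"
          proof
            assume "x = {}"
            hence "cpl N x = {0..<N}" by (simp add: cpl_def)
            thus False using cx zn by simp
          qed
          moreover have "x \<noteq> {1}"
          proof
            assume "x = {1}"
            hence "z = cpl N {1}" using cx by simp
            thus False using zn by simp
          qed
          ultimately have "x \<in> Xs N" by (simp add: Xs_def)
          thus ?thesis using pairz cx by blast
        qed
      qed
    qed
  qed
  have wform: "w x = (if x = {} then w {} else 0)" if "w \<in> orth_compl N (Bs N)" for w x
    using comp[OF that] by auto
  have nent: "\<not> entangled N w" if w: "w \<in> orth_compl N (Bs N)" for w
  proof -
    define f where "f i b = (if b then 0 else (if i = 0 then w {} else 1))" for i :: nat and b
    have "w x = (\<Prod>i<N. f i (i \<in> x))" if x: "x \<subseteq> {0..<N}" for x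
    proof (cases "x = {}")
      case True
      have "(\<Prod>i<N. f i (i \<in> x)) = (\<Prod>i<N. if i = 0 then w {} else 1)"
        using True by (simp add: f_def)
      also have "\<dots> = w {}" using F0 by (simp add: prod.delta)
      finally show ?thesis using True by simp
    next
      case False
      then obtain i where i: "i \<in> x" by blast
      hence "i \<in> {..<N}" using x by auto
      moreover have "f i (i \<in> x) = 0" using i by (simp add: f_def)
      ultimately have "(\<Prod>i<N. f i (i \<in> x)) = 0" by (metis finite_lessThan prod_zero_iff)
      thus ?thesis using wform[OF w, of x] False by simp
    qed
    hence "qstate N w \<longrightarrow> fully_product N w" unfolding fully_product_def by blast
    thus ?thesis by (auto simp: entangled_def)
  qed
  have cons: "UEB_conserved_all_bipartitions N (Bs N)"
    unfolding UEB_conserved_all_bipartitions_def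
  proof (intro allI impI ballI)
    fix S w assume w: "w \<in> orth_compl N (Bs N)"
    define A where "A = (\<lambda>s::nat set. if s = {} then w {} else 0)"
    define Bf where "Bf = (\<lambda>s::nat set. if s = {} then (1::complex) else 0)"
    have e: "w x = A (x \<inter> S) * Bf (x - S)" for x
    proof (cases "x = {}")
      case True thus ?thesis by (simp add: A_def Bf_def)
    next
      case False
      hence "x \<inter> S \<noteq> {} \<or> x - S \<noteq> {}" by blast
      thus ?thesis using wform[OF w, of x] False by (auto simp: A_def Bf_def)
    qed
    have "qstate N w \<longrightarrow> product_across N S w" unfolding product_across_def using e by blast
    thus "\<not> entangled_across N S w" by (auto simp: entangled_across_def)
  qed
  have "UEB N (Bs N)"
    unfolding UEB_def using os gme GME_entangled[OF _ N] spp nent by blast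
  thus ?thesis using gme cons by blast
qed

theorem proposition4:
  shows "(\<forall>N::nat. N \<ge> 2 \<longrightarrow> \<not> (\<exists>B. UPB N B \<and> UPB_unext_all_bipartitions N B))
       \<and> (\<forall>N::nat. N \<ge> 3 \<longrightarrow> (\<exists>B. UEB N B \<and> (\<forall>v\<in>B. GME N v) \<and> UEB_conserved_all_bipartitions N B))"
proof (intro conjI allI impI)
  fix N :: nat assume N: "N \<ge> 2"
  show "\<not> (\<exists>B. UPB N B \<and> UPB_unext_all_bipartitions N B)"
  proof
    assume "\<exists>B. UPB N B \<and> UPB_unext_all_bipartitions N B"
    then obtain B where B: "UPB N B" "UPB_unext_all_bipartitions N B" by blast
    obtain w where w: "w \<in> orth_compl N B" "product_across N {0} w" using part1[OF N B(1)] by blast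
    have "1 \<in> {0..<N}" "1 \<notin> {0::nat}" using N by auto
    hence "{0} \<noteq> {0..<N}" by blast
    hence "bipartition N {0}" using N unfolding bipartition_def by simp
    thus False using B(2) w unfolding UPB_unext_all_bipartitions_def by blast
  qed
next
  fix N :: nat assume N: "N \<ge> 3"
  show "\<exists>B. UEB N B \<and> (\<forall>v\<in>B. GME N v) \<and> UEB_conserved_all_bipartitions N B"
    using part2[OF N] by blast
qed

end
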